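(* Let $S\subset\mathbb{R}^q$ be compact, let $s\in S$, let $c_1,\dots,c_M\in S$, and let $(\xi_k)_{k\in\mathbb{N}}\subset\mathbb{R}^q$ be bounded. Suppose $\ell(x,\xi)=\rho(\|x-\xi\|)$ where $\rho:[0,\infty)\to(0,1)$ is continuous and injective. Then for every $\delta>0$ there exists $\epsilon\in(0,1)$ such that for all $k\in\mathbb{N}$ and all $i\in\{1,\dots,M\}$, $$\big|\,\|\xi_k-s\|-\|\xi_k-c_i\|\,\big|\ge\delta\implies|\ell(s,\xi_k)-\ell(c_i,\xi_k)|\ge\epsilon.$$ *)

theory Defs
  imports "HOL-Analysis.Analysis"
begin

end

theory Submission
  imports Defs
begin

theorem lemma1:
  fixes S :: "'a::euclidean_space set"
    and s :: 'a and c :: "nat \<Rightarrow> 'a" and M :: nat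
    and \<xi> :: "nat \<Rightarrow> 'a"
    and \<rho> :: "real \<Rightarrow> real"
    and ell :: "'a \<Rightarrow> 'a \<Rightarrow> real"
  assumes "compact S"
    and "s \<in> S"
    and "\<And>i. i \<in> {1..M} \<Longrightarrow> c i \<in> S"
    and "bounded (range \<xi>)"
    and "continuous_on {0..} \<rho>"
    and "inj_on \<rho> {0..}"
    and "\<rho> ` {0..} \<subseteq> {0<..<1}"
    and "\<And>x y. ell x y = \<rho> (norm (x - y))"
  shows "\<forall>\<delta>>0. \<exists>\<epsilon>. 0 < \<epsilon> \<and> \<epsilon> < 1 \<and>
           (\<forall>k i. i \<in> {1..M} \<longrightarrow>
              \<bar>norm (\<xi> k - s) - norm (\<xi> k - c i)\<bar> \<ge> \<delta> \<longrightarrow>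
              \<bar>ell s (\<xi> k) - ell (c i) (\<xi> k)\<bar> \<ge> \<epsilon>)"
proof (intro allI impI)
  fix \<delta> :: real assume d: "\<delta> > 0"
  obtain B where B: "\<And>k. norm (\<xi> k) \<le> B"
    using assms(4) unfolding bounded_iff by auto
  obtain C where C: "\<And>x. x \<in> S \<Longrightarrow> norm x \<le> C"
    using compact_imp_bounded[OF assms(1)] unfolding bounded_iff by auto
  define R where "R = B + C"
  have nb: "norm (\<xi> k - x) \<le> R" if "x \<in> S" for k x
    using norm_triangle_ineq4[of "\<xi> k" x] B[of k] C[OF that] unfolding R_def by linarith
  define K :: "(real \<times> real) set" where
    "K = ({0..R} \<times> {0..R}) \<inter> {p. \<delta> \<le> \<bar>fst p - snd p\<bar>}"
  define g where "g = (\<lambda>p::real\<times>real. \<bar>\<rho> (fst p) - \<rho> (snd p)\<bar>)"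
  have Kc: "compact K"
    unfolding K_def
    by (intro compact_Int_closed compact_Times compact_Icc closed_Collect_le continuous_intros)
  have gc: "continuous_on K g"
  proof -
    have f: "fst ` K \<subseteq> {0..}" and s2: "snd ` K \<subseteq> {0..}" unfolding K_def by auto
    have "continuous_on K (\<rho> \<circ> fst)"
      by (rule continuous_on_compose[OF continuous_on_fst[OF continuous_on_id]])
         (rule continuous_on_subset[OF assms(5) f])
    moreover have "continuous_on K (\<rho> \<circ> snd)"
      by (rule continuous_on_compose[OF continuous_on_snd[OF continuous_on_id]])
         (rule continuous_on_subset[OF assms(5) s2])
    ultimately show ?thesis unfolding g_def o_def by (intro continuous_intros)
  qed
  have gpos: "g p > 0" if "p \<in> K" for p
  proof -
    have "fst p \<in> {0..}" "snd p \<in> {0..}" "fst p \<noteq> snd p" using that d unfolding K_def by auto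
    then have "\<rho> (fst p) \<noteq> \<rho> (snd p)" using assms(6) unfolding inj_on_def by blast
    then show ?thesis unfolding g_def by simp
  qed
  show "\<exists>\<epsilon>. 0 < \<epsilon> \<and> \<epsilon> < 1 \<and>
           (\<forall>k i. i \<in> {1..M} \<longrightarrow>
              \<bar>norm (\<xi> k - s) - norm (\<xi> k - c i)\<bar> \<ge> \<delta> \<longrightarrow>
              \<bar>ell s (\<xi> k) - ell (c i) (\<xi> k)\<bar> \<ge> \<epsilon>)"
  proof (cases "K = {}")
    case True
    show ?thesis
    proof (intro exI[of _ "1/2"] conjI allI impI)
      fix k i assume i: "i \<in> {1..M}" and h: "\<bar>norm (\<xi> k - s) - norm (\<xi> k - c i)\<bar> \<ge> \<delta>"
      have "(norm (\<xi> k - s), norm (\<xi> k - c i)) \<in> K"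
        unfolding K_def using nb[OF assms(2)] nb[OF assms(3)[OF i]] h by auto
      with True show "\<bar>ell s (\<xi> k) - ell (c i) (\<xi> k)\<bar> \<ge> 1/2" by simp
    qed auto
  next
    case False
    obtain p where p: "p \<in> K" and pm: "\<And>q. q \<in> K \<Longrightarrow> g p \<le> g q"
      using continuous_attains_inf[OF Kc False gc] by blast
    show ?thesis
    proof (intro exI[of _ "min (g p) (1/2)"] conjI allI impI)
      show "0 < min (g p) (1/2)" using gpos[OF p] by simp
      show "min (g p) (1/2) < 1" by simp
      fix k i assume i: "i \<in> {1..M}" and h: "\<bar>norm (\<xi> k - s) - norm (\<xi> k - c i)\<bar> \<ge> \<delta>"
      have q: "(norm (\<xi> k - s), norm (\<xi> k - c i)) \<in> K"
        unfolding K_def using nb[OF assms(2)] nb[OF assms(3)[OF i]] h by auto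
      have "ell s (\<xi> k) = \<rho> (norm (\<xi> k - s))" using assms(8) norm_minus_commute by metis
      moreover have "ell (c i) (\<xi> k) = \<rho> (norm (\<xi> k - c i))" using assms(8) norm_minus_commute by metis
      ultimately show "\<bar>ell s (\<xi> k) - ell (c i) (\<xi> k)\<bar> \<ge> min (g p) (1/2)"
        using pm[OF q] unfolding g_def by simp
    qed
  qed
qed

end
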